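(* Let $x\in\mathrm{dom}(\mathcal R)$ satisfy $\mathcal R(x)=\inf\{\mathcal R(z):z\in\mathbb X,Az=Ax\}$, let $x_\alpha\in R_\alpha(Ax)$, $\alpha>0$, be any selection, and let $\phi\in\Phi$. The following are equivalent: (i) $\mathcal F(\sigma_x)\le\phi$ pointwise on $[0,\infty)$; (ii) $\sigma_x(\alpha)\le\sup_{t\ge0}\big(\phi(t)-\frac t{2\alpha}\big)$ for all $\alpha>0$; (iii) $\mathcal R(x)-\mathcal R(z)\le\phi(\|Ax-Az\|^2_{\mathbb Y})$ for all $z\in\mathbb X$. In particular, $\mathcal R(x)-\mathcal R(z)\le(\mathcal F(\sigma_x))(\|Ax-Az\|_{\mathbb Y}^2)$ for all $z\in\mathbb X$.
   Context: Standing setting: $\mathbb X$ real Banach space, $\tau$ a topology with $(\mathbb X,\tau)$ locally convex Hausdorff; $\mathcal R:\mathbb X\to(-\infty,\infty]$ proper convex with $\tau$-compact sublevel sets; $\mathbb Y$ real Hilbert space; $A:\mathbb X\to\mathbb Y$ linear, $\tau$-to-weak continuous. $T_\alpha(x,g):=\frac1{2\alpha}\|g-Ax\|_{\mathbb Y}^2+\mathcal R(x)$, $R_\alpha(g):=\operatorname{argmin}_{x\in\mathrm{dom}(\mathcal R)}T_\alpha(x,g)$. Defect: $\sigma_x(\alpha):=T_\alpha(x,Ax)-T_\alpha(x_\alpha,Ax)$ for $\alpha>0$. $\Phi$ is the set of concave upper semicontinuous functions $\phi:[0,\infty)\to[0,\infty)$. For a function $\sigma:(0,\infty)\to[0,\infty]$,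 $\mathcal F(\sigma):[0,\infty)\to[-\infty,\infty)$ is defined by $(\mathcal F(\sigma))(t):=\inf_{\alpha>0}\big(\sigma(\alpha)+\frac t{2\alpha}\big)$. *)

theory Defs
  imports "HOL-Analysis.Analysis"
begin

definition lc_hausdorff_tvs :: "'a::real_vector topology \<Rightarrow> bool" where
  "lc_hausdorff_tvs \<tau> \<longleftrightarrow>
     topspace \<tau> = UNIV \<and>
     continuous_map (prod_topology \<tau> \<tau>) \<tau> (\<lambda>(x, y). x + y) \<and>
     continuous_map (prod_topology euclideanreal \<tau>) \<tau> (\<lambda>(c, x). c *\<^sub>R x) \<and>
     (\<forall>U. openin \<tau> U \<and> 0 \<in> U \<longrightarrow> (\<exists>V. openin \<tau> V \<and> convex V \<and> 0 \<in> V \<and> V \<subseteq> U)) \<and>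
     Hausdorff_space \<tau>"

definition weak_topology :: "'b::real_inner topology" where
  "weak_topology = topology_generated_by {{y. inner y v \<in> U} | v U. open U}"

definition proper_convex :: "('a::real_vector \<Rightarrow> ereal) \<Rightarrow> bool" where
  "proper_convex R \<longleftrightarrow>
     (\<forall>x. R x \<noteq> -\<infinity>) \<and> (\<exists>x. R x < \<infinity>) \<and>
     (\<forall>x y t. 0 < t \<and> t < 1 \<longrightarrow>
        R ((1 - t) *\<^sub>R x + t *\<^sub>R y) \<le> ereal (1 - t) * R x + ereal t * R y)"

definition dom_R :: "('a \<Rightarrow> ereal) \<Rightarrow> 'a set" where
  "dom_R R = {x. R x < \<infinity>}"

definition Tik :: "('a \<Rightarrow> ereal) \<Rightarrow> ('a \<Rightarrow> 'b::real_normed_vector) \<Rightarrow> real \<Rightarrow> 'a \<Rightarrow> 'b \<Rightarrow> ereal" where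
  "Tik R A \<alpha> x g = ereal (1 / (2 * \<alpha>) * (norm (g - A x))\<^sup>2) + R x"

definition Ralpha :: "('a \<Rightarrow> ereal) \<Rightarrow> ('a \<Rightarrow> 'b::real_normed_vector) \<Rightarrow> real \<Rightarrow> 'b \<Rightarrow> 'a set" where
  "Ralpha R A \<alpha> g = {x \<in> dom_R R. \<forall>z \<in> dom_R R. Tik R A \<alpha> x g \<le> Tik R A \<alpha> z g}"

definition defect :: "('a \<Rightarrow> ereal) \<Rightarrow> ('a \<Rightarrow> 'b::real_normed_vector) \<Rightarrow> 'a \<Rightarrow> (real \<Rightarrow> 'a) \<Rightarrow> real \<Rightarrow> ereal" where
  "defect R A x xa \<alpha> = Tik R A \<alpha> x (A x) - Tik R A \<alpha> (xa \<alpha>) (A x)"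

definition Ftrans :: "(real \<Rightarrow> ereal) \<Rightarrow> real \<Rightarrow> ereal" where
  "Ftrans \<sigma> t = (INF \<alpha>\<in>{0<..}. \<sigma> \<alpha> + ereal (t / (2 * \<alpha>)))"

definition usc_on :: "real set \<Rightarrow> (real \<Rightarrow> real) \<Rightarrow> bool" where
  "usc_on S f \<longleftrightarrow> (\<forall>c. openin (top_of_set S) {t \<in> S. f t < c})"

definition PhiClass :: "(real \<Rightarrow> real) set" where
  "PhiClass = {\<phi>. (\<forall>t\<ge>0. \<phi> t \<ge> 0) \<and> concave_on {0..} \<phi> \<and> usc_on {0..} \<phi>}"

end

theory Submission imports Defs begin

lemma conc3:
  assumes "concave_on {0..} \<phi>" "0 \<le> a" "a < b" "b < (c::real)"
  shows "(c - a) * \<phi> b \<ge> (c - b) * \<phi> a + (b - a) * \<phi> c"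
proof -
  define t where "t = (b - a) / (c - a)"
  have t0: "t \<ge> 0" "t \<le> 1" using assms by (auto simp: t_def field_simps)
  have tc: "t * (c - a) = b - a" using assms by (simp add: t_def)
  have "(1 - t) *\<^sub>R a + t *\<^sub>R c = a + t * (c - a)" by (simp add: algebra_simps)
  hence bt: "(1 - t) *\<^sub>R a + t *\<^sub>R c = b" using tc by simp
  have "\<phi> ((1 - t) *\<^sub>R a + t *\<^sub>R c) \<ge> (1 - t) * \<phi> a + t * \<phi> c"
    using concave_onD[OF assms(1) t0] assms by auto
  hence "\<phi> b \<ge> (1 - t) * \<phi> a + t * \<phi> c" using bt by simp
  hence "(c - a) * \<phi> b \<ge> (c - a) * ((1 - t) * \<phi> a + t * \<phi> c)"
    using assms by (intro mult_left_mono) auto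
  also have "(c - a) * ((1 - t) * \<phi> a + t * \<phi> c) = (c - b) * \<phi> a + (b - a) * \<phi> c"
  proof -
    have "(c - a) * ((1 - t) * \<phi> a + t * \<phi> c) = (c - a) * \<phi> a - (t * (c - a)) * \<phi> a + (t * (c - a)) * \<phi> c"
      by (simp add: algebra_simps)
    also have "\<dots> = (c - b) * \<phi> a + (b - a) * \<phi> c" unfolding tc by (simp add: algebra_simps)
    finally show ?thesis .
  qed
  finally show ?thesis .
qed

lemma dual:
  assumes "\<phi> \<in> PhiClass" "t \<ge> 0" "(e::real) > 0"
  shows "\<exists>s>0. \<forall>u\<ge>0. \<phi> u \<le> \<phi> t + e + s * (u - t)"
proof -
  have nn: "\<And>u. u \<ge> 0 \<Longrightarrow> \<phi> u \<ge> 0" and cc: "concave_on {0..} \<phi>"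
    and us: "usc_on {0..} \<phi>" using assms(1) by (auto simp: PhiClass_def)
  have "openin (top_of_set {0..}) {u \<in> {0..}. \<phi> u < \<phi> t + e}"
    using us by (simp add: usc_on_def)
  moreover have "t \<in> {u \<in> {0..}. \<phi> u < \<phi> t + e}" using assms by auto
  ultimately obtain d where d: "d > 0" "\<And>u. u \<in> {0..} \<Longrightarrow> dist u t < d \<Longrightarrow> \<phi> u < \<phi> t + e"
    unfolding openin_euclidean_subtopology_iff by blast
  define w where "w = t + d / 2"
  define s0 where "s0 = (\<phi> w - \<phi> t) / (w - t)"
  have wt: "w - t > 0" using d by (simp add: w_def)
  have s0w: "s0 * (w - t) = \<phi> w - \<phi> t" using wt by (simp add: s0_def)
  have key: "(w - t) * (\<phi> t + s0 * (u - t)) = (w - t) * \<phi> t + (u - t) * (\<phi> w - \<phi> t)" for u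
  proof -
    have "(w - t) * (\<phi> t + s0 * (u - t)) = (w - t) * \<phi> t + (u - t) * (s0 * (w - t))"
      by (simp add: algebra_simps)
    thus ?thesis using s0w by simp
  qed
  have A: "\<phi> u \<le> \<phi> t + s0 * (u - t)" if "u > w" for u
  proof -
    have "(u - t) * \<phi> w \<ge> (u - w) * \<phi> t + (w - t) * \<phi> u"
      using conc3[OF cc, of t w u] that assms wt by auto
    hence "(w - t) * \<phi> u \<le> (w - t) * (\<phi> t + s0 * (u - t))"
      unfolding key by (simp add: algebra_simps)
    thus ?thesis using wt by simp
  qed
  have B: "\<phi> u \<le> \<phi> t + s0 * (u - t)" if "u \<ge> 0" "u < t" for u
  proof -
    have "(w - u) * \<phi> t \<ge> (w - t) * \<phi> u + (t - u) * \<phi> w"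
      using conc3[OF cc, of u t w] that assms wt by auto
    hence "(w - t) * \<phi> u \<le> (w - t) * (\<phi> t + s0 * (u - t))"
      unfolding key by (simp add: algebra_simps)
    thus ?thesis using wt by simp
  qed
  have s0: "s0 \<ge> 0"
  proof (rule ccontr)
    assume "\<not> s0 \<ge> 0"
    hence sn: "s0 < 0" by simp
    define u where "u = w + (\<phi> t + 1) / (- s0)"
    have pt: "\<phi> t \<ge> 0" using nn assms by auto
    have uw: "u > w" using sn pt by (simp add: u_def field_simps)
    have "\<phi> u \<le> \<phi> t + s0 * (u - t)" using A uw by simp
    also have "s0 * (u - t) \<le> s0 * (u - w)" using sn wt by (simp add: mult_left_mono_neg)
    also have "s0 * (u - w) = - (\<phi> t + 1)" using sn by (simp add: u_def field_simps)
    finally have "\<phi> u < 0" by simp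
    moreover have "u \<ge> 0" using uw wt assms by linarith
    ultimately show False using nn by force
  qed
  define s where "s = s0 + e / (t + 1)"
  have "e / (t + 1) > 0" using assms by simp
  hence sp: "s > 0" using s0 by (simp add: s_def)
  have "\<forall>u\<ge>0. \<phi> u \<le> \<phi> t + e + s * (u - t)"
  proof (intro allI impI)
    fix u :: real assume u0: "u \<ge> 0"
    have et: "e / (t + 1) * t \<le> e" using assms by (simp add: field_simps)
    consider "u > w" | "u < t" | "t \<le> u \<and> u \<le> w" by linarith
    then show "\<phi> u \<le> \<phi> t + e + s * (u - t)"
    proof cases
      case 1
      have "s0 * (u - t) \<le> s * (u - t)" using 1 wt assms
        by (intro mult_right_mono) (auto simp: s_def)
      thus ?thesis using A[OF 1] assms by linarith
    next
      case 2
      have "s * (u - t) = s0 * (u - t) - e / (t + 1) * (t - u)" by (simp add: s_def ring_distribs)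
      moreover have "e / (t + 1) * (t - u) \<le> e / (t + 1) * t" using u0 assms
        by (intro mult_left_mono) auto
      ultimately show ?thesis using B[OF u0 2] et by linarith
    next
      case 3
      have "dist u t < d" using 3 d by (simp add: w_def dist_real_def)
      hence "\<phi> u < \<phi> t + e" using d u0 by auto
      moreover have "s * (u - t) \<ge> 0" using sp 3 by simp
      ultimately show ?thesis by linarith
    qed
  qed
  thus ?thesis using sp by blast
qed


theorem lemma5p5:
  fixes \<tau> :: "'a::banach topology"
    and R :: "'a \<Rightarrow> ereal"
    and A :: "'a \<Rightarrow> 'b::{real_inner, complete_space}"
    and x :: 'a and xa :: "real \<Rightarrow> 'a" and \<phi> :: "real \<Rightarrow> real"
  assumes "lc_hausdorff_tvs \<tau>"
    and "proper_convex R"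
    and "\<forall>c::real. compactin \<tau> {z. R z \<le> ereal c}"
    and "linear A"
    and "continuous_map \<tau> weak_topology A"
    and "x \<in> dom_R R"
    and "R x = (INF z\<in>{z. A z = A x}. R z)"
    and "\<forall>\<alpha>>0. xa \<alpha> \<in> Ralpha R A \<alpha> (A x)"
    and "\<phi> \<in> PhiClass"
  shows "((\<forall>t\<ge>0. Ftrans (defect R A x xa) t \<le> ereal (\<phi> t)) \<longleftrightarrow>
          (\<forall>\<alpha>>0. defect R A x xa \<alpha> \<le> (SUP t\<in>{0..}. ereal (\<phi> t - t / (2 * \<alpha>))))) \<and>
         ((\<forall>\<alpha>>0. defect R A x xa \<alpha> \<le> (SUP t\<in>{0..}. ereal (\<phi> t - t / (2 * \<alpha>)))) \<longleftrightarrow>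
          (\<forall>z. R x - R z \<le> ereal (\<phi> ((norm (A x - A z))\<^sup>2)))) \<and>
         (\<forall>z. R x - R z \<le> Ftrans (defect R A x xa) ((norm (A x - A z))\<^sup>2))"
proof -
  note as = assms
  define \<sigma> where "\<sigma> = defect R A x xa"
  define N where "N z = (norm (A x - A z))\<^sup>2" for z
  have ninf: "\<And>z. R z \<noteq> -\<infinity>" using as(2) by (simp add: proper_convex_def)
  obtain rx where rx: "R x = ereal rx" using as(6) ninf[of x]
    by (cases "R x") (auto simp: dom_R_def)
  have Tik: "Tik R A \<alpha> z (A x) = ereal (N z / (2 * \<alpha>)) + R z" for \<alpha> z
    by (simp add: Tik_def N_def)
  have xad: "xa \<alpha> \<in> dom_R R" and xamin: "\<And>z. z \<in> dom_R R \<Longrightarrow>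
      Tik R A \<alpha> (xa \<alpha>) (A x) \<le> Tik R A \<alpha> z (A x)" if "\<alpha> > 0" for \<alpha>
    using as(8) that by (auto simp: Ralpha_def)
  define ra where "ra \<alpha> = real_of_ereal (R (xa \<alpha>))" for \<alpha>
  have ra: "R (xa \<alpha>) = ereal (ra \<alpha>)" if "\<alpha> > 0" for \<alpha>
    using xad[OF that] ninf[of "xa \<alpha>"] by (cases "R (xa \<alpha>)") (auto simp: dom_R_def ra_def)
  have sig: "\<sigma> \<alpha> = ereal (rx - ra \<alpha> - N (xa \<alpha>) / (2 * \<alpha>))" if "\<alpha> > 0" for \<alpha>
  proof -
    have "Tik R A \<alpha> x (A x) = ereal rx" by (simp add: Tik_def rx)
    thus ?thesis using that by (simp add: \<sigma>_def defect_def Tik ra)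
  qed
  have F2: "R x - R z \<le> \<sigma> \<alpha> + ereal (N z / (2 * \<alpha>))" if "\<alpha> > 0" for \<alpha> z
  proof (cases "R z")
    case PInf thus ?thesis by (simp add: rx)
  next
    case MInf thus ?thesis using ninf by simp
  next
    case (real rz)
    hence "z \<in> dom_R R" by (simp add: dom_R_def)
    from xamin[OF that this] have "ereal (N (xa \<alpha>) / (2 * \<alpha>)) + ereal (ra \<alpha>) \<le> ereal (N z / (2 * \<alpha>)) + ereal rz"
      by (simp add: Tik ra[OF that] real)
    hence "N (xa \<alpha>) / (2 * \<alpha>) + ra \<alpha> \<le> N z / (2 * \<alpha>) + rz" by simp
    thus ?thesis by (simp add: sig[OF that] rx real)
  qed
  have P4: "\<forall>z. R x - R z \<le> Ftrans \<sigma> (N z)"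
    unfolding Ftrans_def by (auto intro!: INF_greatest F2)
  define P1 where "P1 = (\<forall>t\<ge>0. Ftrans \<sigma> t \<le> ereal (\<phi> t))"
  define P2 where "P2 = (\<forall>\<alpha>>0. \<sigma> \<alpha> \<le> (SUP t\<in>{0..}. ereal (\<phi> t - t / (2 * \<alpha>))))"
  define P3 where "P3 = (\<forall>z. R x - R z \<le> ereal (\<phi> (N z)))"
  have N0: "N z \<ge> 0" for z by (simp add: N_def)
  have 13: "P1 \<Longrightarrow> P3" unfolding P1_def P3_def using P4 N0 order_trans by blast
  have 32: "P3 \<Longrightarrow> P2" unfolding P2_def
  proof (intro allI impI)
    fix \<alpha> :: real assume h: P3 "\<alpha> > 0"
    have "R x - R (xa \<alpha>) \<le> ereal (\<phi> (N (xa \<alpha>)))" using h(1) by (simp add: P3_def)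
    hence "rx - ra \<alpha> \<le> \<phi> (N (xa \<alpha>))" by (simp add: rx ra[OF h(2)])
    hence "\<sigma> \<alpha> \<le> ereal (\<phi> (N (xa \<alpha>)) - N (xa \<alpha>) / (2 * \<alpha>))" by (simp add: sig[OF h(2)])
    also have "\<dots> \<le> (SUP t\<in>{0..}. ereal (\<phi> t - t / (2 * \<alpha>)))"
      by (rule SUP_upper) (simp add: N0)
    finally show "\<sigma> \<alpha> \<le> (SUP t\<in>{0..}. ereal (\<phi> t - t / (2 * \<alpha>)))" .
  qed
  have 21: "P2 \<Longrightarrow> P1" unfolding P1_def
  proof (intro allI impI)
    fix t :: real assume h: P2 "t \<ge> 0"
    show "Ftrans \<sigma> t \<le> ereal (\<phi> t)"
    proof (rule ereal_le_epsilon2)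
      fix e :: real assume e: "e > 0"
      obtain s where s: "s > 0" "\<And>u. u \<ge> 0 \<Longrightarrow> \<phi> u \<le> \<phi> t + e + s * (u - t)"
        using dual[OF as(9) h(2) e] by blast
      define \<alpha> where "\<alpha> = 1 / (2 * s)"
      have ap: "\<alpha> > 0" using s by (simp add: \<alpha>_def)
      have tw: "u / (2 * \<alpha>) = s * u" for u using s by (simp add: \<alpha>_def)
      have "\<sigma> \<alpha> \<le> (SUP u\<in>{0..}. ereal (\<phi> u - u / (2 * \<alpha>)))" using h(1) ap by (simp add: P2_def)
      also have "\<dots> \<le> ereal (\<phi> t + e - s * t)"
      proof (rule SUP_least)
        fix u :: real assume "u \<in> {0..}"
        hence "\<phi> u \<le> \<phi> t + e + s * (u - t)" using s by simp
        thus "ereal (\<phi> u - u / (2 * \<alpha>)) \<le> ereal (\<phi> t + e - s * t)"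
          unfolding tw by (simp add: algebra_simps)
      qed
      finally have sa: "\<sigma> \<alpha> \<le> ereal (\<phi> t + e - s * t)" .
      have "Ftrans \<sigma> t \<le> \<sigma> \<alpha> + ereal (t / (2 * \<alpha>))"
        unfolding Ftrans_def using ap by (intro INF_lower) simp
      also have "\<dots> \<le> ereal (\<phi> t + e - s * t) + ereal (s * t)"
        unfolding tw by (rule add_right_mono[OF sa])
      also have "\<dots> = ereal (\<phi> t) + ereal e" by simp
      finally show "Ftrans \<sigma> t \<le> ereal (\<phi> t) + ereal e" .
    qed
  qed
  have "(P1 \<longleftrightarrow> P2) \<and> (P2 \<longleftrightarrow> P3)" using 13 32 21 by blast
  thus ?thesis using P4 unfolding P1_def P2_def P3_def \<sigma>_def N_def by blast
qed

end
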